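(* Let $G=(V,E)$ be a finite simple graph of order $n$ and let $T=n-1$. If $(s,x,y,z)$ is an optimal solution of the integer program with the constraints of the Infection Model $\mathrm{IM}(G,T)$ and objective "minimize $\sum_{v\in V}s_v+\frac{z}{2T}$", then $C=\{v\in V\colon s_v=1\}$ is a minimum zero forcing set of $G$ with $\mathrm{pt}(G)=\mathrm{pt}(G,C)=z$.
   Context: Zero forcing: under the standard color change rule a filled vertex $u$ can force a non-filled vertex $v$ if $v$ is the only non-filled neighbor of $u$; $C\subseteq V$ is a zero forcing set if, starting with $C$ filled and repeatedly forcing, all of $V$ becomes filled. $\mathrm{Z}(G)$ is the minimum size of a zero forcing set; a minimum zero forcing set has size $\mathrm{Z}(G)$. The propagation time $\mathrm{pt}(G,C)$ is the smallest $t^*$ such that, starting from $C^{[0]}=C$ and setting $C^{[t]}=C^{[t-1]}\cup\{v\notin C^{[t-1]}\colon$ some $u\in C^{[t-1]}$ has $v$ as its only neighbor outside $C^{[t-1]}\}$, one has $C^{[t^*]}=V$ ($\infty$ if $C$ is not a zero forcing set). $\mathrm{pt}(G)=\min\{\mathrm{pt}(G,C)\colon C$ a minimum zero forcing set$\}$. $N(u)$ is the neighborhood of $u$. Infection Model constraints: let $A$ be the set of arcs containing both $(u,v)$ and $(v,u)$ for each edge $\{u,v\}\in E$. Variables $s_v\in\{0,1\}$ and $x_v\in\{0,1,\dots,T\}$ for $v\in V$, $y_a\in\{0,1\}$ for $a\in A$, and $z\in\{0,1,\dots,T\}$, subject to: (i) $s_v+\sum_{a=(u,v)\in A}y_a=1$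 for all $v\in V$; (ii) $x_u-x_v+(T+1)y_a\leq T$ for all $a=(u,v)\in A$; (iii) $x_w-x_v+(T+1)y_a\leq T$ for all $a=(u,v)\in A$ and $w\in N(u)\setminus\{v\}$; (iv) $x_v-z\leq 0$ for all $v\in V$. *)

theory Defs
  imports Main "HOL-Library.Extended_Nat"
begin

definition simple_graph :: "'a set \<Rightarrow> ('a \<Rightarrow> 'a \<Rightarrow> bool) \<Rightarrow> bool" where
  "simple_graph V E \<longleftrightarrow> finite V \<and> (\<forall>u v. E u v \<longrightarrow> u \<in> V \<and> v \<in> V)
     \<and> (\<forall>u v. E u v \<longrightarrow> E v u) \<and> (\<forall>u. \<not> E u u)"

definition nbrs :: "'a set \<Rightarrow> ('a \<Rightarrow> 'a \<Rightarrow> bool) \<Rightarrow> 'a \<Rightarrow> 'a set" where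
  "nbrs V E u = {w \<in> V. E u w}"

definition zf_step :: "'a set \<Rightarrow> ('a \<Rightarrow> 'a \<Rightarrow> bool) \<Rightarrow> 'a set \<Rightarrow> 'a set" where
  "zf_step V E C = C \<union> {v \<in> V - C. \<exists>u \<in> C. nbrs V E u - C = {v}}"

definition zf_set :: "'a set \<Rightarrow> ('a \<Rightarrow> 'a \<Rightarrow> bool) \<Rightarrow> 'a set \<Rightarrow> bool" where
  "zf_set V E C \<longleftrightarrow> C \<subseteq> V \<and> (\<exists>t. (zf_step V E ^^ t) C = V)"

definition zf_number :: "'a set \<Rightarrow> ('a \<Rightarrow> 'a \<Rightarrow> bool) \<Rightarrow> nat" where
  "zf_number V E = Min {card C | C. zf_set V E C}"

definition min_zf_set :: "'a set \<Rightarrow> ('a \<Rightarrow> 'a \<Rightarrow> bool) \<Rightarrow> 'a set \<Rightarrow> bool" where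
  "min_zf_set V E C \<longleftrightarrow> zf_set V E C \<and> card C = zf_number V E"

definition pt_set :: "'a set \<Rightarrow> ('a \<Rightarrow> 'a \<Rightarrow> bool) \<Rightarrow> 'a set \<Rightarrow> enat" where
  "pt_set V E C = (if zf_set V E C then enat (LEAST t. (zf_step V E ^^ t) C = V) else \<infinity>)"

definition pt :: "'a set \<Rightarrow> ('a \<Rightarrow> 'a \<Rightarrow> bool) \<Rightarrow> enat" where
  "pt V E = (INF C \<in> {C. min_zf_set V E C}. pt_set V E C)"

definition IM_feasible :: "'a set \<Rightarrow> ('a \<Rightarrow> 'a \<Rightarrow> bool) \<Rightarrow> nat \<Rightarrow>
    ('a \<Rightarrow> nat) \<Rightarrow> ('a \<Rightarrow> nat) \<Rightarrow> ('a \<times> 'a \<Rightarrow> nat) \<Rightarrow> nat \<Rightarrow> bool" where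
  "IM_feasible V E T s x y z \<longleftrightarrow>
     (\<forall>v \<in> V. s v \<le> 1 \<and> x v \<le> T) \<and>
     (\<forall>u v. E u v \<longrightarrow> y (u, v) \<le> 1) \<and> z \<le> T \<and>
     (\<forall>v \<in> V. s v + (\<Sum>u \<in> {u \<in> V. E u v}. y (u, v)) = 1) \<and>
     (\<forall>u v. E u v \<longrightarrow> int (x u) - int (x v) + (int T + 1) * int (y (u, v)) \<le> int T) \<and>
     (\<forall>u v. E u v \<longrightarrow> (\<forall>w \<in> nbrs V E u - {v}.
         int (x w) - int (x v) + (int T + 1) * int (y (u, v)) \<le> int T)) \<and>
     (\<forall>v \<in> V. int (x v) - int z \<le> 0)"

definition IM_objective :: "'a set \<Rightarrow> nat \<Rightarrow> ('a \<Rightarrow> nat) \<Rightarrow> nat \<Rightarrow> real" where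
  "IM_objective V T s z = real (\<Sum>v \<in> V. s v) + real z / (2 * real T)"

definition IM_optimal :: "'a set \<Rightarrow> ('a \<Rightarrow> 'a \<Rightarrow> bool) \<Rightarrow> nat \<Rightarrow>
    ('a \<Rightarrow> nat) \<Rightarrow> ('a \<Rightarrow> nat) \<Rightarrow> ('a \<times> 'a \<Rightarrow> nat) \<Rightarrow> nat \<Rightarrow> bool" where
  "IM_optimal V E T s x y z \<longleftrightarrow> IM_feasible V E T s x y z \<and>
     (\<forall>s' x' y' z'. IM_feasible V E T s' x' y' z' \<longrightarrow>
        IM_objective V T s z \<le> IM_objective V T s' z')"

end

theory Submission
  imports Defs
begin

lemma step_sub: "C \<subseteq> zf_step V E C" by (auto simp: zf_step_def)

lemma step_V: "C \<subseteq> V \<Longrightarrow> zf_step V E C \<subseteq> V" by (auto simp: zf_step_def)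

lemma iter_V: "C \<subseteq> V \<Longrightarrow> (zf_step V E ^^ t) C \<subseteq> V"
  by (induct t) (auto dest: step_V[of _ V E])

lemma iter_mono: "t \<le> t' \<Longrightarrow> (zf_step V E ^^ t) C \<subseteq> (zf_step V E ^^ t') C"
proof (induct rule: dec_induct)
  case base then show ?case by simp
next
  case (step n) then show ?case using step_sub[of "(zf_step V E ^^ n) C" V E] by auto
qed

lemma fix_iter: "zf_step V E D = D \<Longrightarrow> (zf_step V E ^^ m) D = D"
  by (induct m) auto

lemma feasible_reach:
  assumes F: "IM_feasible V E T s x y z" and G: "simple_graph V E"
  shows "v \<in> V \<Longrightarrow> v \<in> (zf_step V E ^^ x v) {v\<in>V. s v = 1}"
proof (induction "x v" arbitrary: v rule: less_induct)
  case less
  let ?C = "{v\<in>V. s v = 1}"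
  let ?f = "zf_step V E"
  show ?case
  proof (cases "s v = 1")
    case True then show ?thesis using less.prems iter_mono[of 0 "x v" V E ?C] by auto
  next
    case False
    have sv: "s v = 0" using F less.prems False by (auto simp: IM_feasible_def)
    have "(\<Sum>u\<in>{u\<in>V. E u v}. y(u,v)) = 1" using F less.prems sv by (auto simp: IM_feasible_def)
    then obtain u where u: "u\<in>V" "E u v" "y(u,v) \<noteq> 0"
      by (metis (mono_tags, lifting) mem_Collect_eq sum.neutral zero_neq_one)
    have "y(u,v) \<le> 1" using F u by (simp add: IM_feasible_def)
    then have yu: "y(u,v) = 1" using u(3) by linarith
    have "int (x u) - int (x v) + (int (T) + 1) * int (y (u, v)) \<le> int T"
      using F u by (auto simp: IM_feasible_def)
    then have xu: "x u < x v" using yu by simp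
    have xw: "x w < x v" if "w \<in> nbrs V E u - {v}" for w
    proof -
      have "int (x w) - int (x v) + (int (T) + 1) * int (y (u, v)) \<le> int T"
        using F u that by (auto simp: IM_feasible_def)
      then show ?thesis using yu by simp
    qed
    obtain k where k: "x v = Suc k" using xu by (cases "x v") auto
    let ?D = "(?f^^k) ?C"
    have uD: "u \<in> ?D"
      using less.hyps[OF xu u(1)] iter_mono[of "x u" k V E ?C] xu k by auto
    have wD: "w \<in> ?D" if "w \<in> nbrs V E u - {v}" for w
    proof -
      have "w \<in> V" using that by (auto simp: nbrs_def)
      then show ?thesis
        using less.hyps[OF xw[OF that]] iter_mono[of "x w" k V E ?C] xw[OF that] k by auto
    qed
    have vN: "v \<in> nbrs V E u" using u less.prems by (auto simp: nbrs_def)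
    have "v \<in> ?D \<or> nbrs V E u - ?D = {v}" using wD vN by blast
    then have "v \<in> ?f ?D" using uD less.prems unfolding zf_step_def by blast
    then show ?thesis using k by simp
  qed
qed

lemma card_bound:
  assumes fin: "finite V" and CV: "C \<subseteq> V"
    and tV: "(zf_step V E ^^ t) C = V" and lt: "\<forall>t'<t. (zf_step V E ^^ t') C \<noteq> V"
  shows "card C + t \<le> card V"
proof -
  let ?f = "zf_step V E"
  have "t' \<le> t \<Longrightarrow> card C + t' \<le> card ((?f^^t') C)" for t'
  proof (induct t')
    case 0 then show ?case by simp
  next
    case (Suc n)
    have ne: "?f ((?f^^n) C) \<noteq> (?f^^n) C"
    proof
      assume eq: "?f ((?f^^n) C) = (?f^^n) C"
      have tn: "(t - n) + n = t" using Suc.prems by simp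
      have "(?f^^((t-n)+n)) C = (?f^^(t-n)) ((?f^^n) C)" by (simp add: funpow_add)
      then have "(?f^^t) C = (?f^^(t-n)) ((?f^^n) C)" by (simp only: tn)
      also have "\<dots> = (?f^^n) C" using fix_iter[OF eq] by simp
      finally have "(?f^^t) C = (?f^^n) C" .
      then have "(?f^^n) C = V" using tV by argo
      moreover have "n < t" using Suc.prems by simp
      ultimately show False using lt by blast
    qed
    have sub: "(?f^^n) C \<subseteq> ?f ((?f^^n) C)" by (rule step_sub)
    have ps: "(?f^^n) C \<subset> ?f ((?f^^n) C)" using sub ne by (simp add: psubset_eq)
    have fn: "finite (?f ((?f^^n) C))"
      by (rule finite_subset[OF step_V[OF iter_V[OF CV]] fin])
    have "card ((?f^^n) C) < card (?f ((?f^^n) C))" by (rule psubset_card_mono[OF fn ps])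
    then show ?case using Suc by simp
  qed
  from this[of t] tV show ?thesis by simp
qed

lemma pt_bound:
  assumes fin: "finite V" and Z: "zf_set V E C"
  shows "(LEAST t. (zf_step V E ^^ t) C = V) \<le> card V - 1
         \<and> (zf_step V E ^^ (LEAST t. (zf_step V E ^^ t) C = V)) C = V"
proof -
  let ?f = "zf_step V E"
  let ?p = "LEAST t. (?f ^^ t) C = V"
  have CV: "C \<subseteq> V" using Z by (auto simp: zf_set_def)
  have ex: "\<exists>t. (?f ^^ t) C = V" using Z by (auto simp: zf_set_def)
  have P: "(?f ^^ ?p) C = V" using LeastI_ex[OF ex] .
  have lt: "\<forall>t'<?p. (?f ^^ t') C \<noteq> V" using not_less_Least by blast
  have cb: "card C + ?p \<le> card V" by (rule card_bound[OF fin CV P lt])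
  show ?thesis
  proof (cases "C = {}")
    case True
    have "?f {} = {}" by (auto simp: zf_step_def)
    then have "(?f ^^ ?p) {} = {}" by (rule fix_iter)
    then have "V = {}" using P True by simp
    then have "(?f^^0) C = V" using CV by simp
    then have "?p \<le> 0" by (rule Least_le)
    then show ?thesis using P by simp
  next
    case False
    then have "card C \<ge> 1" using finite_subset[OF CV fin] by (simp add: Suc_le_eq card_gt_0_iff)
    then show ?thesis using cb P by simp
  qed
qed

lemma indicator_sum: "finite V \<Longrightarrow> (\<Sum>v\<in>V. (if v \<in> C then 1 else 0 :: nat)) = card (V \<inter> C)"
  by (simp add: sum.If_cases)

lemma construct:
  assumes G: "simple_graph V E" and Z: "zf_set V E C"
  shows "\<exists>s' x' y'. IM_feasible V E (card V - 1) s' x' y' (LEAST t. (zf_step V E ^^ t) C = V)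
            \<and> (\<Sum>v\<in>V. s' v) = card C"
proof -
  let ?f = "zf_step V E"
  let ?p = "LEAST t. (?f ^^ t) C = V"
  let ?T = "card V - 1"
  have fin: "finite V" using G by (simp add: simple_graph_def)
  have CV: "C \<subseteq> V" using Z by (auto simp: zf_set_def)
  from pt_bound[OF fin Z] have pT: "?p \<le> ?T" and P: "(?f ^^ ?p) C = V" by auto
  define s' where "s' v = (if v \<in> C then 1 else 0::nat)" for v
  define x' where "x' v = (LEAST t. v \<in> (?f^^t) C)" for v
  define par where "par v = (SOME u. u \<in> (?f^^(x' v - 1)) C \<and> nbrs V E u - (?f^^(x' v - 1)) C = {v})" for v
  define y' where "y' a = (if snd a \<notin> C \<and> fst a = par (snd a) then 1 else 0::nat)" for a
  have xin: "v \<in> (?f^^(x' v)) C" and xle: "x' v \<le> ?p" if "v \<in> V" for v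
  proof -
    have "v \<in> (?f^^?p) C" using P that by simp
    then show "v \<in> (?f^^(x' v)) C" "x' v \<le> ?p" unfolding x'_def
      by (rule LeastI[of "\<lambda>t. v \<in> (?f^^t) C" ?p], rule Least_le[of "\<lambda>t. v \<in> (?f^^t) C" ?p])
  qed
  have xle': "x' w \<le> k" if "w \<in> (?f^^k) C" for w k
    unfolding x'_def using that by (rule Least_le[of "\<lambda>t. w \<in> (?f^^t) C" k])
  have par: "par v \<in> (?f^^(x' v - 1)) C \<and> nbrs V E (par v) - (?f^^(x' v - 1)) C = {v}
          \<and> x' v \<ge> 1" if "v \<in> V - C" for v
  proof -
    have "x' v \<noteq> 0"
    proof
      assume "x' v = 0"
      then have "v \<in> C" using xin[of v] that by simp
      then show False using that by blast
    qed
    then obtain k where k: "x' v = Suc k" by (cases "x' v") auto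
    have lt: "k < (LEAST t. v \<in> (?f^^t) C)" using k unfolding x'_def by simp
    have "v \<notin> (?f^^k) C" using not_less_Least[OF lt] by simp
    moreover have "v \<in> ?f ((?f^^k) C)" using xin[of v] that k by simp
    ultimately have "\<exists>u. u \<in> (?f^^k) C \<and> nbrs V E u - (?f^^k) C = {v}"
      unfolding zf_step_def by blast
    then have "(SOME u. u \<in> (?f^^k) C \<and> nbrs V E u - (?f^^k) C = {v}) \<in> (?f^^k) C
       \<and> nbrs V E (SOME u. u \<in> (?f^^k) C \<and> nbrs V E u - (?f^^k) C = {v}) - (?f^^k) C = {v}"
      by (rule someI_ex)
    moreover have "par v = (SOME u. u \<in> (?f^^k) C \<and> nbrs V E u - (?f^^k) C = {v})"
      unfolding par_def k by simp
    ultimately have "par v \<in> (?f^^k) C \<and> nbrs V E (par v) - (?f^^k) C = {v}"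
      by simp
    then show ?thesis using k by simp
  qed
  have feas: "IM_feasible V E ?T s' x' y' ?p"
    unfolding IM_feasible_def
  proof (intro conjI ballI allI impI)
    fix v assume v: "v \<in> V"
    show "s' v \<le> 1" by (simp add: s'_def)
    show "x' v \<le> ?T" using xle[OF v] pT by simp
    show "int (x' v) - int ?p \<le> 0" using xle[OF v] by simp
    show "s' v + (\<Sum>u \<in> {u \<in> V. E u v}. y' (u, v)) = 1"
    proof (cases "v \<in> C")
      case True then show ?thesis by (simp add: s'_def y'_def)
    next
      case False
      have vn: "v \<in> nbrs V E (par v)" using par[of v] v False by blast
      then have pin: "par v \<in> {u \<in> V. E u v}" using G by (auto simp: nbrs_def simple_graph_def)
      have "(\<Sum>u \<in> {u \<in> V. E u v}. y' (u, v)) = (\<Sum>u \<in> {u \<in> V. E u v}. if u = par v then 1 else 0)"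
        using False by (intro sum.cong) (auto simp: y'_def)
      also have "\<dots> = 1" using pin fin by (simp add: sum.delta)
      finally show ?thesis using False by (simp add: s'_def)
    qed
  next
    fix u v show "E u v \<Longrightarrow> y' (u, v) \<le> 1" by (simp add: y'_def)
  next
    show "?p \<le> ?T" by (rule pT)
  next
    fix u v assume e: "E u v"
    have uv: "u \<in> V" "v \<in> V" using e G by (auto simp: simple_graph_def)
    show "int (x' u) - int (x' v) + (int ?T + 1) * int (y' (u, v)) \<le> int ?T"
    proof (cases "y' (u,v) = 1")
      case True
      then have vc: "v \<in> V - C" "u = par v" using uv by (auto simp: y'_def split: if_splits)
      have "u \<in> (?f^^(x' v - 1)) C" "x' v \<ge> 1" using par[OF vc(1)] vc(2) by auto
      then have "x' u \<le> x' v - 1" "x' v \<ge> 1" using xle' by blast+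
      then have "x' u + 1 \<le> x' v" by linarith
      then show ?thesis using True by simp
    next
      case False then have "y' (u,v) = 0" by (simp add: y'_def split: if_splits)
      then show ?thesis using xle[OF uv(1)] pT by simp
    qed
  next
    fix u v w assume e: "E u v" and w: "w \<in> nbrs V E u - {v}"
    have uv: "u \<in> V" "v \<in> V" using e G by (auto simp: simple_graph_def)
    have wV: "w \<in> V" using w by (auto simp: nbrs_def)
    show "int (x' w) - int (x' v) + (int ?T + 1) * int (y' (u, v)) \<le> int ?T"
    proof (cases "y' (u,v) = 1")
      case True
      then have vc: "v \<in> V - C" "u = par v" using uv by (auto simp: y'_def split: if_splits)
      then have "w \<in> (?f^^(x' v - 1)) C" using par[of v] w by blast
      then have "x' w \<le> x' v - 1" using xle' by blast
      have "x' v \<ge> 1" using par[OF vc(1)] by blast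
      then have "x' w + 1 \<le> x' v" using \<open>x' w \<le> x' v - 1\<close> by linarith
      then show ?thesis using True by simp
    next
      case False then have "y' (u,v) = 0" by (simp add: y'_def split: if_splits)
      then show ?thesis using xle[OF wV] pT by simp
    qed
  qed
  have "(\<Sum>v\<in>V. s' v) = card (V \<inter> C)" unfolding s'_def by (rule indicator_sum[OF fin])
  also have "\<dots> = card C" using CV by (simp add: Int_absorb1)
  finally show ?thesis using feas by blast
qed


theorem corollary3p4:
  fixes V :: "'a set" and E :: "'a \<Rightarrow> 'a \<Rightarrow> bool"
    and s x :: "'a \<Rightarrow> nat" and y :: "'a \<times> 'a \<Rightarrow> nat" and z :: nat
  assumes "simple_graph V E"
    and "IM_optimal V E (card V - 1) s x y z"
  shows "min_zf_set V E {v \<in> V. s v = 1}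
         \<and> pt V E = pt_set V E {v \<in> V. s v = 1}
         \<and> pt_set V E {v \<in> V. s v = 1} = enat z"
proof -
  let ?T = "card V - 1"
  let ?C0 = "{v \<in> V. s v = 1}"
  let ?f = "zf_step V E"
  have fin: "finite V" using assms(1) by (simp add: simple_graph_def)
  have F: "IM_feasible V E ?T s x y z"
    and opt: "\<forall>s' x' y' z'. IM_feasible V E ?T s' x' y' z' \<longrightarrow>
        IM_objective V ?T s z \<le> IM_objective V ?T s' z'"
    using assms(2) unfolding IM_optimal_def by auto
  have zT: "z \<le> ?T" using F by (simp add: IM_feasible_def)
  have C0V: "?C0 \<subseteq> V" by auto
  have reachz: "(?f^^z) ?C0 = V"
  proof
    show "(?f^^z) ?C0 \<subseteq> V" by (rule iter_V[OF C0V])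
    show "V \<subseteq> (?f^^z) ?C0"
    proof
      fix v assume v: "v \<in> V"
      have "int (x v) - int z \<le> 0" using F v unfolding IM_feasible_def by blast
      then have "x v \<le> z" by simp
      then show "v \<in> (?f^^z) ?C0"
        using feasible_reach[OF F assms(1) v] iter_mono[of "x v" z V E ?C0] by blast
    qed
  qed
  have Z0: "zf_set V E ?C0" unfolding zf_set_def using reachz C0V by blast
  define p0 where "p0 = (LEAST t. (?f^^t) ?C0 = V)"
  have p0z: "p0 \<le> z" unfolding p0_def by (rule Least_le[of "\<lambda>t. (?f^^t) ?C0 = V" z, OF reachz])
  have sumC0: "(\<Sum>v\<in>V. s v) = card ?C0"
  proof -
    have "(\<Sum>v\<in>V. s v) = (\<Sum>v\<in>V. if v \<in> ?C0 then 1 else 0)"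
    proof (rule sum.cong)
      fix v assume v: "v \<in> V"
      have "s v \<le> 1" using F v by (simp add: IM_feasible_def)
      then show "s v = (if v \<in> ?C0 then 1 else 0)" using v by auto
    qed simp
    also have "\<dots> = card (V \<inter> ?C0)" by (rule indicator_sum[OF fin])
    also have "V \<inter> ?C0 = ?C0" by auto
    finally show ?thesis .
  qed
  have key: "card ?C0 \<le> card C \<and> (card C = card ?C0 \<longrightarrow> z \<le> (LEAST t. (?f^^t) C = V))"
    if Z: "zf_set V E C" for C
  proof -
    let ?p = "LEAST t. (?f^^t) C = V"
    obtain s' x' y' where feas: "IM_feasible V E ?T s' x' y' ?p" and ss: "(\<Sum>v\<in>V. s' v) = card C"
      using construct[OF assms(1) Z] by blast
    have pT: "?p \<le> ?T" using pt_bound[OF fin Z] by blast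
    have "IM_objective V ?T s z \<le> IM_objective V ?T s' ?p" using opt feas by blast
    then have ob: "real (card ?C0) + real z / (2 * real ?T) \<le> real (card C) + real ?p / (2 * real ?T)"
      unfolding IM_objective_def using sumC0 ss by simp
    show ?thesis
    proof (cases "?T = 0")
      case True
      then have "z = 0" using zT by simp
      then show ?thesis using ob True by simp
    next
      case False
      define d where "d = 2 * real ?T"
      have d: "d > 0" using False by (simp add: d_def)
      have ob': "real (card ?C0) + real z / d \<le> real (card C) + real ?p / d"
        using ob by (simp add: d_def)
      have a: "real z / d \<ge> 0" using d by simp
      have "real ?p \<le> real ?T" using pT by simp
      then have "real ?p / d \<le> real ?T / d" using d by (simp add: divide_right_mono)
      also have "real ?T / d = 1/2" using d by (simp add: d_def)
      finally have b: "real ?p / d \<le> 1/2" .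
      have "real (card ?C0) < real (card C) + 1" using ob' a b by linarith
      then have c1: "card ?C0 \<le> card C" by linarith
      have c2: "z \<le> ?p" if eq: "card C = card ?C0"
      proof (rule ccontr)
        assume "\<not> z \<le> ?p"
        then have "real ?p < real z" by simp
        then have "real ?p / d < real z / d" using d by (simp add: divide_strict_right_mono)
        then show False using ob' eq by simp
      qed
      show ?thesis using c1 c2 by blast
    qed
  qed
  have Sfin: "finite {card C | C. zf_set V E C}"
  proof (rule finite_subset)
    show "{card C | C. zf_set V E C} \<subseteq> {..card V}"
      using fin by (auto simp: zf_set_def intro: card_mono)
  qed simp
  have zn: "zf_number V E = card ?C0"
    unfolding zf_number_def
  proof (rule Min_eqI[OF Sfin])
    show "card ?C0 \<le> k" if "k \<in> {card C | C. zf_set V E C}" for k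
      using that key by blast
    show "card ?C0 \<in> {card C | C. zf_set V E C}" using Z0 by blast
  qed
  have min0: "min_zf_set V E ?C0" unfolding min_zf_set_def using Z0 zn by simp
  have "z \<le> p0" using key[OF Z0] unfolding p0_def by simp
  then have p0eq: "p0 = z" using p0z by simp
  have ps0: "pt_set V E ?C0 = enat z" unfolding pt_set_def using Z0 p0eq p0_def by simp
  have "pt V E = enat z"
    unfolding pt_def
  proof (rule antisym)
    show "(INF C \<in> {C. min_zf_set V E C}. pt_set V E C) \<le> enat z"
      using INF_lower[of ?C0 "{C. min_zf_set V E C}" "pt_set V E"] min0 ps0 by simp
    show "enat z \<le> (INF C \<in> {C. min_zf_set V E C}. pt_set V E C)"
    proof (rule INF_greatest)
      fix C assume "C \<in> {C. min_zf_set V E C}"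
      then have ZC: "zf_set V E C" and cc: "card C = card ?C0"
        using zn by (auto simp: min_zf_set_def)
      have "z \<le> (LEAST t. (?f^^t) C = V)" using key[OF ZC] cc by blast
      then show "enat z \<le> pt_set V E C" unfolding pt_set_def using ZC by simp
    qed
  qed
  then show ?thesis using min0 ps0 by simp
qed

end
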